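(* Let $\rho$ be a quantum state on the $L$-qubit Hilbert space $\mathcal{H}_L$ and let $\Psi,\Phi$ be two pure states on $\mathcal{H}_L\otimes\mathcal{H}_M$ ($\mathcal{H}_M$ an $M$-qubit space), both purifications of $\rho$ (i.e. $\operatorname{Tr}_{\mathcal{H}_M}\Psi=\operatorname{Tr}_{\mathcal{H}_M}\Phi=\rho$) and both of definite parity. Then there exists a unitary channel $\mathcal{U}$ on $\mathcal{H}_M$ that maps states of definite parity into states of definite parity and satisfies $(\mathcal{I}\otimes\mathcal{U})(\Psi)=\Phi$.
   Context: For $n$ qubits, the computational basis vectors $|s_1,\dots,s_n\rangle$, $s_i\in\{0,1\}$, have parity $p=\bigoplus_i s_i$; $\mathcal{H}_n=\mathcal{H}_n^0\oplus\mathcal{H}_n^1$ where $\mathcal{H}_n^p$ is spanned by basis vectors of parity $p$ (for $\mathcal{H}_L\otimes\mathcal{H}_M$, parity is computed over all $L+M$ qubits). A state $\rho$ has definite parity if $\rho=\rho_0+\rho_1$ with $\rho_p$ supported on $\mathcal{H}_n^p$; in particular a pure state has definite parity $p$ if its vector lies in $\mathcal{H}_n^p$. *)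

theory Defs
  imports "Jordan_Normal_Form.Matrix"
begin

(* Computational basis of n qubits: basis vector |s_1,...,s_n> has index
   sum_i s_i * 2^(n-i) in {0..<2^n}.  Its parity is the parity of the number
   of 1-bits. *)
definition basis_parity :: "nat \<Rightarrow> nat \<Rightarrow> bool" where
  "basis_parity n i = odd (card {k. k < n \<and> odd (i div 2 ^ k)})"

definition adj :: "complex mat \<Rightarrow> complex mat" where
  "adj A = mat (dim_col A) (dim_row A) (\<lambda>(i,j). cnj (A $$ (j,i)))"

definition hermitian :: "complex mat \<Rightarrow> bool" where
  "hermitian A \<longleftrightarrow> square_mat A \<and> adj A = A"

definition psd :: "complex mat \<Rightarrow> bool" where
  "psd A \<longleftrightarrow> hermitian A \<and>
     (\<forall>v. dim_vec v = dim_row A \<longrightarrow> 0 \<le> Re (conjugate v \<bullet> (A *\<^sub>v v)))"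

definition mtrace :: "complex mat \<Rightarrow> complex" where
  "mtrace A = (\<Sum>i<dim_row A. A $$ (i,i))"

definition qstate :: "nat \<Rightarrow> complex mat \<Rightarrow> bool" where
  "qstate n \<rho> \<longleftrightarrow> \<rho> \<in> carrier_mat (2^n) (2^n) \<and> psd \<rho> \<and> mtrace \<rho> = 1"

definition vnorm2 :: "complex vec \<Rightarrow> real" where
  "vnorm2 v = (\<Sum>i<dim_vec v. (cmod (v $ i))\<^sup>2)"

definition proj :: "complex vec \<Rightarrow> complex mat" where
  "proj v = mat (dim_vec v) (dim_vec v) (\<lambda>(i,j). v $ i * cnj (v $ j))"

definition pure_state :: "nat \<Rightarrow> complex mat \<Rightarrow> bool" where
  "pure_state n \<Psi> \<longleftrightarrow> (\<exists>v. dim_vec v = 2^n \<and> vnorm2 v = 1 \<and> \<Psi> = proj v)"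

definition supported_on_parity :: "nat \<Rightarrow> bool \<Rightarrow> complex mat \<Rightarrow> bool" where
  "supported_on_parity n p A \<longleftrightarrow> A \<in> carrier_mat (2^n) (2^n) \<and>
     (\<forall>i j. i < 2^n \<longrightarrow> j < 2^n \<longrightarrow>
        (basis_parity n i \<noteq> p \<or> basis_parity n j \<noteq> p) \<longrightarrow> A $$ (i,j) = 0)"

definition definite_parity :: "nat \<Rightarrow> complex mat \<Rightarrow> bool" where
  "definite_parity n \<rho> \<longleftrightarrow> (\<exists>\<rho>0 \<rho>1. supported_on_parity n False \<rho>0 \<and>
     supported_on_parity n True \<rho>1 \<and> \<rho> = \<rho>0 + \<rho>1)"

(* Kronecker product, consistent with the basis ordering of H_L \<otimes> H_M
   (first L qubits = more significant bits) *)
definition kron :: "complex mat \<Rightarrow> complex mat \<Rightarrow> complex mat" where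
  "kron A B = mat (dim_row A * dim_row B) (dim_col A * dim_col B)
     (\<lambda>(i,j). A $$ (i div dim_row B, j div dim_col B) * B $$ (i mod dim_row B, j mod dim_col B))"

definition ptrace_M :: "nat \<Rightarrow> nat \<Rightarrow> complex mat \<Rightarrow> complex mat" where
  "ptrace_M L M X = mat (2^L) (2^L)
     (\<lambda>(i,j). \<Sum>k<2^M. X $$ (i * 2^M + k, j * 2^M + k))"

definition unitary :: "nat \<Rightarrow> complex mat \<Rightarrow> bool" where
  "unitary n U \<longleftrightarrow> U \<in> carrier_mat (2^n) (2^n) \<and> U * adj U = 1\<^sub>m (2^n)"

definition uchan :: "complex mat \<Rightarrow> complex mat \<Rightarrow> complex mat" where
  "uchan U X = U * X * adj U"

end

theory Submission
  imports Defs "Jordan_Normal_Form.Determinant"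
begin


definition ip :: "complex vec \<Rightarrow> complex vec \<Rightarrow> complex" where
  "ip x y = (\<Sum>l<dim_vec x. x$l * cnj (y$l))"

lemma ip_self: "ip x x = of_real (\<Sum>l<dim_vec x. (cmod (x$l))\<^sup>2)"
  unfolding ip_def of_real_sum by (simp only: complex_norm_square)

lemma ip_self_cnj: "cnj (ip x x) = ip x x"
  by (simp add: ip_self)

lemma ip_self_zero: assumes "ip x x = 0" "l < dim_vec x" shows "x $ l = 0"
proof -
  have "(\<Sum>l<dim_vec x. (cmod (x$l))\<^sup>2) = 0" using assms(1) by (metis ip_self of_real_eq_0_iff)
  then have "\<forall>l\<in>{..<dim_vec x}. (cmod (x$l))\<^sup>2 = 0"
    by (subst sum_nonneg_eq_0_iff[symmetric]) auto
  then show ?thesis using assms(2) by auto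
qed

lemma cnj_ip: "dim_vec y = dim_vec x \<Longrightarrow> cnj (ip x y) = ip y x"
  unfolding ip_def by (simp add: mult.commute)

lemma ip_minus_right: "x \<in> carrier_vec n \<Longrightarrow> y \<in> carrier_vec n \<Longrightarrow> z \<in> carrier_vec n \<Longrightarrow>
   ip x (y - z) = ip x y - ip x z"
  unfolding ip_def by (simp add: sum_subtractf algebra_simps)

lemma ip_minus_left: "x \<in> carrier_vec n \<Longrightarrow> y \<in> carrier_vec n \<Longrightarrow> z \<in> carrier_vec n \<Longrightarrow>
   ip (y - z) x = ip y x - ip z x"
  unfolding ip_def by (simp add: sum_subtractf algebra_simps)

lemma hh_sum:
  fixes f :: "nat \<Rightarrow> complex" and b :: complex
  shows "(\<Sum>k<n. ((if i = k then 1 else 0) - f i * cnj (f k) / b) * ((if j = k then 1 else 0) - f k * cnj (f j) / cnj b))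
   = (\<Sum>k<n. (if i = k then 1 else 0) * (if j = k then 1 else 0)) - (\<Sum>k<n. (if i = k then 1 else 0) * (f k * cnj (f j) / cnj b))
      - (\<Sum>k<n. (if j = k then 1 else 0) * (f i * cnj (f k) / b))
      + (f i * cnj (f j) / (b * cnj b)) * (\<Sum>k<n. f k * cnj (f k))"
  by (simp add: sum_subtractf sum.distrib sum_distrib_left sum_divide_distrib algebra_simps)

lemma div_if0: "(if P then a else 0) / (b::complex) = (if P then a / b else 0)" by simp

lemma hh_sum2:
  fixes f :: "nat \<Rightarrow> complex" and b :: complex
  assumes "(\<Sum>k<n. f k * cnj (f k)) = b + cnj b" "b \<noteq> 0" "i < n" "j < n"
  shows "(\<Sum>k<n. ((if i = k then 1 else 0) - f i * cnj (f k) / b) * ((if j = k then 1 else 0) - f k * cnj (f j) / cnj b))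
   = (if i = j then 1 else 0)"
proof -
  have "(\<Sum>k<n. ((if i = k then 1 else 0) - f i * cnj (f k) / b) * ((if j = k then 1 else 0) - f k * cnj (f j) / cnj b))
   = (if i = j then 1 else 0) - f i * cnj (f j) / cnj b - f i * cnj (f j) / b
      + (f i * cnj (f j) / (b * cnj b)) * (b + cnj b)"
    unfolding hh_sum using assms by (simp add: div_if0 if_distrib[where f="\<lambda>z. z * _"] cong: if_cong)
  also have "\<dots> = (if i = j then 1 else 0)"
    using assms(2) by (simp add: field_simps)
  finally show ?thesis .
qed

lemma times_if01: "(a::complex) * (if P then 1 else 0) = (if P then a else 0)" by simp

lemma hh_apply_sum:
  fixes f g z :: "nat \<Rightarrow> complex" and b :: complex
  assumes "i < n"
  shows "(\<Sum>k<n. ((if i = k then 1 else 0) - f i * cnj (g k) / b) * z k) = z i - f i * (\<Sum>k<n. z k * cnj (g k)) / b"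
  using assms by (simp add: sum_subtractf sum_distrib_left sum_divide_distrib algebra_simps times_if01 if_distrib[where f="\<lambda>z. z * _"] cong: if_cong)

definition hh :: "nat \<Rightarrow> complex vec \<Rightarrow> complex vec \<Rightarrow> complex mat" where
  "hh n x y = mat n n (\<lambda>(i,j). (if i = j then 1 else 0) - (x - y)$i * cnj ((x - y)$j) / ip x (x - y))"

locale hhloc =
  fixes n :: nat and x y :: "complex vec"
  assumes x: "x \<in> carrier_vec n" and y: "y \<in> carrier_vec n"
    and nrm: "ip x x = ip y y" and ne: "x \<noteq> y"
begin

abbreviation "u \<equiv> x - y"
abbreviation "\<beta> \<equiv> ip x (x - y)"

lemma dx[simp]: "dim_vec x = n" using x by simp
lemma dy[simp]: "dim_vec y = n" using y by simp

lemma u: "u \<in> carrier_vec n" using x y by simp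

lemma uu: "ip u u = \<beta> + cnj \<beta>"
proof -
  have "ip u u = ip x u - ip y u" using ip_minus_left[OF u x y] .
  also have "\<dots> = ip x x - ip x y - (ip y x - ip y y)"
    using ip_minus_right[OF x x y] ip_minus_right[OF y x y] by simp
  finally have "ip u u = ip x x - ip x y - (ip y x - ip y y)" .
  moreover have "cnj \<beta> = ip x x - ip y x"
    using x y by (simp add: ip_minus_right ip_self_cnj cnj_ip)
  moreover have "\<beta> = ip x x - ip x y" using x y by (simp add: ip_minus_right)
  ultimately show ?thesis using nrm by simp
qed

lemma beta_nz: "\<beta> \<noteq> 0"
proof
  assume "\<beta> = 0"
  then have "ip u u = 0" using uu by simp
  then have "\<And>l. l < n \<Longrightarrow> u $ l = 0" using ip_self_zero[of u] u by auto
  then have "x = y" using x y by (intro eq_vecI) (auto simp: algebra_simps)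
  then show False using ne by simp
qed

lemma sum_uu: "(\<Sum>k<n. u$k * cnj (u$k)) = \<beta> + cnj \<beta>"
proof -
  have "dim_vec u = n" using u by simp
  then show ?thesis using uu unfolding ip_def by simp
qed

lemma cnj_if01[simp]: "cnj (if P then 1 else 0) = (if P then 1 else 0)" by simp

lemma hh_carrier: "hh n x y \<in> carrier_mat n n" unfolding hh_def by simp

lemma hh_unitary: "hh n x y * adj (hh n x y) = 1\<^sub>m n"
proof (rule eq_matI)
  fix i j assume ij: "i < dim_row (1\<^sub>m n)" "j < dim_col (1\<^sub>m n)"
  let ?d = "\<lambda>i k. (if i = k then 1 else 0) :: complex"
  have "(hh n x y * adj (hh n x y)) $$ (i,j) =
     (\<Sum>k<n. (?d i k - u$i * cnj (u$k) / \<beta>) * (?d j k - u$k * cnj (u$j) / cnj \<beta>))"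
    using ij unfolding hh_def adj_def by (simp add: scalar_prod_def lessThan_atLeast0 mult.commute)
  also have "\<dots> = ?d i j"
    by (rule hh_sum2[where f="\<lambda>k. u$k"]) (use ij sum_uu beta_nz in auto)
  finally show "(hh n x y * adj (hh n x y)) $$ (i,j) = 1\<^sub>m n $$ (i,j)" using ij by simp
qed (auto simp: hh_def adj_def)

lemma hh_apply: assumes z: "z \<in> carrier_vec n" shows "hh n x y *\<^sub>v z = z - (ip z u / \<beta>) \<cdot>\<^sub>v u"
proof (rule eq_vecI)
  fix i assume i: "i < dim_vec (z - (ip z u / \<beta>) \<cdot>\<^sub>v u)"
  then have i': "i < n" using z by simp
  have "(hh n x y *\<^sub>v z) $ i = (\<Sum>k<n. ((if i = k then 1 else 0) - u$i * cnj (u$k) / \<beta>) * z$k)"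
    using i' z unfolding hh_def by (simp add: scalar_prod_def lessThan_atLeast0 mult.commute)
  also have "\<dots> = z$i - u$i * (\<Sum>k<n. z$k * cnj (u$k)) / \<beta>"
    by (rule hh_apply_sum[where f="\<lambda>k. u$k" and g="\<lambda>k. u$k" and z="\<lambda>k. z$k", OF i'])
  also have "(\<Sum>k<n. z$k * cnj (u$k)) = ip z u" using z unfolding ip_def by simp
  finally show "(hh n x y *\<^sub>v z) $ i = (z - (ip z u / \<beta>) \<cdot>\<^sub>v u) $ i"
    using i' z u by simp
qed (use z in \<open>simp add: hh_def\<close>)

lemma hh_x: "hh n x y *\<^sub>v x = y"
proof -
  have "hh n x y *\<^sub>v x = x - (\<beta> / \<beta>) \<cdot>\<^sub>v u" using hh_apply[OF x] by simp
  also have "\<dots> = y" using beta_nz x y by (intro eq_vecI) auto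
  finally show ?thesis .
qed

lemma hh_fix: assumes "z \<in> carrier_vec n" "ip z u = 0" shows "hh n x y *\<^sub>v z = z"
  using hh_apply[OF assms(1)] assms by (intro eq_vecI) auto

lemma hh_par: assumes "\<And>l. l < n \<Longrightarrow> \<pi> l \<noteq> r \<Longrightarrow> x$l = 0 \<and> y$l = 0"
  and "i < n" "j < n" "\<pi> i \<noteq> \<pi> j" shows "hh n x y $$ (i,j) = 0"
proof -
  have "x$i = 0 \<and> y$i = 0 \<or> x$j = 0 \<and> y$j = 0" using assms by metis
  then show ?thesis using assms(2-4) unfolding hh_def by auto
qed

end

lemma adj_carrier[simp]: "A \<in> carrier_mat n m \<Longrightarrow> adj A \<in> carrier_mat m n"
  unfolding adj_def by simp

lemma adj_dims[simp]: "dim_row (adj A) = dim_col A" "dim_col (adj A) = dim_row A"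
  unfolding adj_def by simp_all

lemma adj_mult: assumes "A \<in> carrier_mat n m" "B \<in> carrier_mat m k"
  shows "adj (A * B) = adj B * adj A"
  using assms unfolding adj_def
  by (intro eq_matI) (auto simp: scalar_prod_def sum_distrib_left mult.commute intro!: sum.cong)

lemma unitary_mult: assumes "A \<in> carrier_mat n n" "B \<in> carrier_mat n n"
  "A * adj A = 1\<^sub>m n" "B * adj B = 1\<^sub>m n" shows "(A * B) * adj (A * B) = 1\<^sub>m n"
proof -
  have aA: "adj A \<in> carrier_mat n n" "adj B \<in> carrier_mat n n" using assms by auto
  have "(A * B) * adj (A * B) = (A * B) * (adj B * adj A)" using assms by (simp add: adj_mult)
  also have "\<dots> = A * (B * (adj B * adj A))" using assms aA by (meson assoc_mult_mat mult_carrier_mat)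
  also have "B * (adj B * adj A) = (B * adj B) * adj A" using assoc_mult_mat[OF assms(2) aA(2) aA(1)] by simp
  finally show ?thesis using assms aA by simp
qed

lemma unitary_left: assumes "A \<in> carrier_mat n n" "A * adj A = 1\<^sub>m n" shows "adj A * A = 1\<^sub>m n"
  using mat_mult_left_right_inverse[OF assms(1) _ assms(2)] assms(1) by simp


lemma ip_unitary: assumes U: "U \<in> carrier_mat n n" and UU: "adj U * U = 1\<^sub>m n"
  and v: "v \<in> carrier_vec n" and w: "w \<in> carrier_vec n"
  shows "ip (U *\<^sub>v v) (U *\<^sub>v w) = ip v w"
proof -
  have e: "\<And>k k'. k < n \<Longrightarrow> k' < n \<Longrightarrow> (\<Sum>l<n. cnj (U$$(l,k')) * U$$(l,k)) = (if k' = k then 1 else 0)"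
  proof -
    fix k k' assume kk: "k < n" "k' < n"
    have "(adj U * U) $$ (k',k) = (\<Sum>l<n. cnj (U$$(l,k')) * U$$(l,k))"
      using U kk unfolding adj_def by (simp add: scalar_prod_def lessThan_atLeast0)
    then show "(\<Sum>l<n. cnj (U$$(l,k')) * U$$(l,k)) = (if k' = k then 1 else 0)" using UU kk by simp
  qed
  have "ip (U *\<^sub>v v) (U *\<^sub>v w) = (\<Sum>l<n. (\<Sum>k<n. U$$(l,k) * v$k) * cnj (\<Sum>k'<n. U$$(l,k') * w$k'))"
    using U v w unfolding ip_def by (simp add: scalar_prod_def lessThan_atLeast0)
  also have "\<dots> = (\<Sum>l<n. \<Sum>k'<n. \<Sum>k<n. v$k * cnj (w$k') * (cnj (U$$(l,k')) * U$$(l,k)))"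
    by (simp add: sum_distrib_left sum_distrib_right cnj_sum algebra_simps)
  also have "\<dots> = (\<Sum>k'<n. \<Sum>l<n. \<Sum>k<n. v$k * cnj (w$k') * (cnj (U$$(l,k')) * U$$(l,k)))"
    by (rule sum.swap)
  also have "\<dots> = (\<Sum>k'<n. \<Sum>k<n. \<Sum>l<n. v$k * cnj (w$k') * (cnj (U$$(l,k')) * U$$(l,k)))"
    by (rule sum.cong[OF refl], rule sum.swap)
  also have "\<dots> = (\<Sum>k'<n. \<Sum>k<n. v$k * cnj (w$k') * (\<Sum>l<n. cnj (U$$(l,k')) * U$$(l,k)))"
    by (simp add: sum_distrib_left)
  also have "\<dots> = (\<Sum>k'<n. \<Sum>k<n. v$k * cnj (w$k') * (if k' = k then 1 else 0))"
    by (intro sum.cong refl) (simp add: e)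
  also have "\<dots> = ip v w" using v unfolding ip_def by (simp add: times_if01 sum.delta)
  finally show ?thesis .
qed

definition ppres :: "nat \<Rightarrow> (nat \<Rightarrow> bool) \<Rightarrow> complex mat \<Rightarrow> bool" where
  "ppres n \<pi> U \<longleftrightarrow> (\<forall>i<n. \<forall>j<n. \<pi> i \<noteq> \<pi> j \<longrightarrow> U$$(i,j) = 0)"

lemma ppres_apply: assumes "ppres n \<pi> U" "U \<in> carrier_mat n n" "v \<in> carrier_vec n"
  "\<And>l. l < n \<Longrightarrow> \<pi> l \<noteq> r \<Longrightarrow> v$l = 0" "l < n" "\<pi> l \<noteq> r"
  shows "(U *\<^sub>v v) $ l = 0"
proof -
  have "(U *\<^sub>v v) $ l = (\<Sum>k<n. U$$(l,k) * v$k)"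
    using assms by (simp add: scalar_prod_def lessThan_atLeast0)
  also have "\<dots> = 0"
  proof (intro sum.neutral ballI)
    fix k assume "k \<in> {..<n}"
    then show "U$$(l,k) * v$k = 0" using assms unfolding ppres_def
      by (cases "\<pi> k = r") auto
  qed
  finally show ?thesis .
qed

lemma ppres_mult: assumes "ppres n \<pi> A" "ppres n \<pi> B" "A \<in> carrier_mat n n" "B \<in> carrier_mat n n"
  shows "ppres n \<pi> (A * B)"
  unfolding ppres_def
proof (intro allI impI)
  fix i j assume ij: "i < n" "j < n" "\<pi> i \<noteq> \<pi> j"
  have "(A * B) $$ (i,j) = (\<Sum>k<n. A$$(i,k) * B$$(k,j))"
    using assms ij by (simp add: scalar_prod_def lessThan_atLeast0)
  also have "\<dots> = 0"
  proof (intro sum.neutral ballI)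
    fix k assume "k \<in> {..<n}"
    then show "A$$(i,k) * B$$(k,j) = 0" using assms ij unfolding ppres_def
      by (cases "\<pi> k = \<pi> i") auto
  qed
  finally show "(A * B) $$ (i,j) = 0" .
qed

lemma main_iter:
  fixes \<pi> c :: "nat \<Rightarrow> bool" and a b :: "nat \<Rightarrow> complex vec"
  assumes "\<forall>i<m. a i \<in> carrier_vec n \<and> b i \<in> carrier_vec n"
    "\<forall>i<m. \<forall>j<m. ip (a i) (a j) = ip (b i) (b j)"
    "\<forall>i<m. \<forall>l<n. \<pi> l \<noteq> c i \<longrightarrow> (a i)$l = 0 \<and> (b i)$l = 0"
  shows "\<exists>U. U \<in> carrier_mat n n \<and> U * adj U = 1\<^sub>m n \<and> ppres n \<pi> U \<and> (\<forall>i<m. U *\<^sub>v a i = b i)"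
  using assms
proof (induction m)
  case 0
  then show ?case by (intro exI[of _ "1\<^sub>m n"]) (auto simp: ppres_def adj_def)
next
  case (Suc m)
  have "\<exists>U. U \<in> carrier_mat n n \<and> U * adj U = 1\<^sub>m n \<and> ppres n \<pi> U \<and> (\<forall>i<m. U *\<^sub>v a i = b i)"
    by (rule Suc.IH) (use Suc.prems in auto)
  then obtain U where U: "U \<in> carrier_mat n n" "U * adj U = 1\<^sub>m n" "ppres n \<pi> U"
    "\<forall>i<m. U *\<^sub>v a i = b i" by blast
  have UU: "adj U * U = 1\<^sub>m n" using unitary_left U by blast
  have am: "a m \<in> carrier_vec n" and bm: "b m \<in> carrier_vec n" using Suc.prems by auto
  define x where "x = U *\<^sub>v a m"
  have x: "x \<in> carrier_vec n" using U am unfolding x_def by simp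
  have xpar: "\<And>l. l < n \<Longrightarrow> \<pi> l \<noteq> c m \<Longrightarrow> x$l = 0"
    unfolding x_def by (rule ppres_apply[OF U(3) U(1) am]) (use Suc.prems in auto)
  have xn: "ip x x = ip (b m) (b m)"
    using ip_unitary[OF U(1) UU am am] Suc.prems(2) unfolding x_def by auto
  have ipb: "\<And>i. i < m \<Longrightarrow> ip (b i) x = ip (b i) (b m)"
  proof -
    fix i assume i: "i < m"
    have "ip (b i) x = ip (U *\<^sub>v a i) (U *\<^sub>v a m)" using U(4) i unfolding x_def by simp
    also have "\<dots> = ip (a i) (a m)" using ip_unitary[OF U(1) UU _ am] Suc.prems(1) i by simp
    finally show "ip (b i) x = ip (b i) (b m)" using Suc.prems(2) i by simp
  qed
  show ?case
  proof (cases "x = b m")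
    case True
    then show ?thesis using U unfolding x_def by (intro exI[of _ U]) (auto simp: less_Suc_eq)
  next
    case False
    interpret h: hhloc n x "b m" using x bm xn False by unfold_locales auto
    define V where "V = hh n x (b m)"
    have V: "V \<in> carrier_mat n n" "V * adj V = 1\<^sub>m n" unfolding V_def
      using h.hh_carrier h.hh_unitary by auto
    have Vp: "ppres n \<pi> V" unfolding V_def ppres_def
      using h.hh_par[of \<pi> "c m"] xpar Suc.prems(3) by auto
    show ?thesis
    proof (intro exI[of _ "V * U"] conjI allI impI)
      show "V * U \<in> carrier_mat n n" using V U by simp
      show "V * U * adj (V * U) = 1\<^sub>m n" using unitary_mult V U by blast
      show "ppres n \<pi> (V * U)" using ppres_mult Vp U V by blast
      fix i assume i: "i < Suc m"
      have bi: "b i \<in> carrier_vec n" "a i \<in> carrier_vec n" using Suc.prems(1) i by auto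
      have "V * U *\<^sub>v a i = V *\<^sub>v (U *\<^sub>v a i)" using V U bi by simp
      also have "\<dots> = b i"
      proof (cases "i = m")
        case True
        then show ?thesis using h.hh_x unfolding V_def x_def by simp
      next
        case False
        then have i': "i < m" using i by simp
        have "ip (b i) (x - b m) = 0" using ipb[OF i'] ip_minus_right[OF bi(1) x bm] by simp
        then show ?thesis using h.hh_fix[OF bi(1)] U(4) i' unfolding V_def by simp
      qed
      finally show "V * U *\<^sub>v a i = b i" .
    qed
  qed
qed




lemma div_low: fixes i l :: nat assumes "k < M" "l < 2^M"
  shows "odd ((i * 2^M + l) div 2^k) = odd (l div 2^k)"
proof -
  have "i * 2^M + l = l + (i * 2^(M-k)) * 2^k" using assms
    by (simp add: power_add[symmetric])
  moreover have "(l + (i * 2^(M-k)) * 2^k) div 2^k = i * 2^(M-k) + l div 2^k"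
    by (rule div_mult_self1) simp
  ultimately have "(i * 2^M + l) div 2^k = l div 2^k + i * 2^(M-k)" by (simp only: add.commute)
  moreover have "even (i * 2^(M-k) :: nat)" using assms by simp
  ultimately show ?thesis by simp
qed

lemma div_high: fixes i l :: nat assumes "l < (2::nat)^M"
  shows "(i * 2^M + l) div 2^(M+j) = i div 2^j"
proof -
  have "(i * 2^M + l) div 2^(M+j) = ((i * 2^M + l) div 2^M) div 2^j"
    by (simp add: power_add div_mult2_eq)
  also have "(i * 2^M + l) div 2^M = i" using assms by simp
  finally show ?thesis .
qed

lemma parity_split: fixes i l :: nat assumes "l < 2^M"
  shows "basis_parity (L + M) (i * 2^M + l) = (basis_parity L i \<noteq> basis_parity M l)"
proof -
  let ?A = "{k. k < M \<and> odd (l div 2^k)}"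
  let ?B = "{k. k < L \<and> odd (i div 2^k)}"
  have S: "{k. k < L + M \<and> odd ((i * 2^M + l) div 2^k)} = ?A \<union> (\<lambda>j. M + j) ` ?B"
  proof (rule Set.set_eqI, rule iffI)
    fix k assume k: "k \<in> {k. k < L + M \<and> odd ((i * 2^M + l) div 2^k)}"
    show "k \<in> ?A \<union> (\<lambda>j. M + j) ` ?B"
    proof (cases "k < M")
      case True then show ?thesis using k div_low[OF True assms, of i] by auto
    next
      case False
      then obtain j where j: "k = M + j" by (metis le_add_diff_inverse not_less)
      then show ?thesis using k div_high[OF assms, of i j] by auto
    qed
  next
    fix k assume "k \<in> ?A \<union> (\<lambda>j. M + j) ` ?B"
    then show "k \<in> {k. k < L + M \<and> odd ((i * 2^M + l) div 2^k)}"
      using div_low[OF _ assms, of _ i] div_high[OF assms, of i] by auto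
  qed
  have "card (?A \<union> (\<lambda>j. M + j) ` ?B) = card ?A + card ((\<lambda>j. M + j) ` ?B)"
    by (rule card_Un_disjoint) auto
  also have "card ((\<lambda>j. M + j) ` ?B) = card ?B" by (rule card_image) (auto simp: inj_on_def)
  finally show ?thesis unfolding basis_parity_def S by auto
qed

definition fl :: "nat \<Rightarrow> nat" where "fl l = (if even l then l + 1 else l - 1)"

lemma fl_fl: "fl (fl l) = l" unfolding fl_def by auto

lemma fl_lt: "0 < M \<Longrightarrow> l < 2^M \<Longrightarrow> fl l < (2::nat)^M"
proof -
  assume M: "0 < M" and l: "l < 2^M"
  have e: "even ((2::nat)^M)" using M by simp
  show ?thesis
  proof (cases "even l")
    case True
    then have "l + 1 \<noteq> 2^M" using e by (metis even_add odd_one)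
    then show ?thesis using True l unfolding fl_def by simp
  next
    case False then show ?thesis using l unfolding fl_def by simp
  qed
qed

lemma fl_div: assumes "0 < k" shows "fl l div 2^k = l div 2^k"
proof -
  have "fl l div 2 = l div 2"
  proof (cases "even l")
    case True then show ?thesis by (simp add: fl_def even_succ_div_two)
  next
    case False
    then have "l - 1 = 2 * (l div 2)" using odd_two_times_div_two_nat[OF False] by simp
    then have "fl l = 2 * (l div 2)" using False by (simp add: fl_def)
    then show ?thesis by simp
  qed
  moreover obtain j where j: "k = Suc j" using assms gr0_conv_Suc by blast
  moreover have "\<And>x::nat. x div 2^(Suc j) = (x div 2) div 2^j"
    by (simp add: div_mult2_eq)
  ultimately show ?thesis by simp
qed

lemma fl_parity: assumes "0 < M" shows "basis_parity M (fl l) = (\<not> basis_parity M l)"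
proof -
  let ?T = "\<lambda>x. {k. 0 < k \<and> k < M \<and> odd (x div 2^k)}"
  have S: "\<And>x::nat. {k. k < M \<and> odd (x div 2^k)} = ?T x \<union> (if odd x then {0} else {})"
  proof (rule Set.set_eqI)
    fix x :: nat and k
    show "k \<in> {k. k < M \<and> odd (x div 2^k)} \<longleftrightarrow> k \<in> ?T x \<union> (if odd x then {0} else {})"
      using assms by (cases "k = 0") auto
  qed
  have c: "\<And>x::nat. card {k. k < M \<and> odd (x div 2^k)} = card (?T x) + (if odd x then 1 else 0)"
    unfolding S by (subst card_Un_disjoint) auto
  have T: "?T (fl l) = ?T l" using fl_div by auto
  have "odd (fl l) = even l" unfolding fl_def by auto
  then show ?thesis unfolding basis_parity_def c T by auto
qed




lemma dp_iff: "definite_parity n \<sigma> \<longleftrightarrow> \<sigma> \<in> carrier_mat (2^n) (2^n) \<and>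
   (\<forall>i j. i < 2^n \<longrightarrow> j < 2^n \<longrightarrow> basis_parity n i \<noteq> basis_parity n j \<longrightarrow> \<sigma> $$ (i,j) = 0)"
proof
  assume "definite_parity n \<sigma>"
  then obtain r0 r1 where r: "supported_on_parity n False r0" "supported_on_parity n True r1" "\<sigma> = r0 + r1"
    unfolding definite_parity_def by blast
  then show "\<sigma> \<in> carrier_mat (2^n) (2^n) \<and>
   (\<forall>i j. i < 2^n \<longrightarrow> j < 2^n \<longrightarrow> basis_parity n i \<noteq> basis_parity n j \<longrightarrow> \<sigma> $$ (i,j) = 0)"
    unfolding supported_on_parity_def by auto
next
  assume a: "\<sigma> \<in> carrier_mat (2^n) (2^n) \<and>
   (\<forall>i j. i < 2^n \<longrightarrow> j < 2^n \<longrightarrow> basis_parity n i \<noteq> basis_parity n j \<longrightarrow> \<sigma> $$ (i,j) = 0)"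
  define r0 where "r0 = mat (2^n) (2^n) (\<lambda>(i,j). if \<not> basis_parity n i \<and> \<not> basis_parity n j then \<sigma> $$ (i,j) else 0)"
  define r1 where "r1 = mat (2^n) (2^n) (\<lambda>(i,j). if basis_parity n i \<and> basis_parity n j then \<sigma> $$ (i,j) else 0)"
  have "supported_on_parity n False r0" "supported_on_parity n True r1"
    unfolding supported_on_parity_def r0_def r1_def by auto
  moreover have "\<sigma> = r0 + r1"
    using a unfolding r0_def r1_def by (intro eq_matI) auto
  ultimately show "definite_parity n \<sigma>" unfolding definite_parity_def by blast
qed

lemma pure_support: assumes "dim_vec v = 2^n" "vnorm2 v = 1" "definite_parity n (proj v)"
  shows "\<exists>p. (\<forall>i<2^n. basis_parity n i \<noteq> p \<longrightarrow> v$i = 0) \<and> (\<exists>i<2^n. v$i \<noteq> 0)"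
proof -
  have "\<exists>i<2^n. v$i \<noteq> 0"
  proof (rule ccontr)
    assume "\<not> ?thesis"
    then have "vnorm2 v = 0" unfolding vnorm2_def using assms(1) by simp
    then show False using assms(2) by simp
  qed
  then obtain i0 where i0: "i0 < 2^n" "v$i0 \<noteq> 0" by blast
  have "\<forall>i<2^n. basis_parity n i \<noteq> basis_parity n i0 \<longrightarrow> v$i = 0"
  proof (intro allI impI)
    fix i assume i: "i < 2^n" "basis_parity n i \<noteq> basis_parity n i0"
    then have "proj v $$ (i,i0) = 0" using assms(3) i0 unfolding dp_iff by blast
    then show "v$i = 0" using i i0 assms(1) unfolding proj_def by simp
  qed
  then show ?thesis using i0 by blast
qed

lemma dp_preserve:
  assumes U: "U \<in> carrier_mat (2^n) (2^n)"
    and Up: "\<forall>k<2^n. \<forall>l<2^n. (basis_parity n k \<noteq> basis_parity n l) \<noteq> f \<longrightarrow> U $$ (k,l) = 0"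
    and s: "definite_parity n \<sigma>"
  shows "definite_parity n (uchan U \<sigma>)"
proof -
  have sc: "\<sigma> \<in> carrier_mat (2^n) (2^n)" and s0: "\<And>(i::nat) (j::nat). i < 2^n \<Longrightarrow> j < 2^n \<Longrightarrow> basis_parity n i \<noteq> basis_parity n j \<Longrightarrow> \<sigma> $$ (i,j) = 0"
    using s unfolding dp_iff by auto
  let ?par = "basis_parity n"
  have "uchan U \<sigma> $$ (k,k') = 0" if kk: "k < 2^n" "k' < 2^n" "?par k \<noteq> ?par k'" for k k'
  proof -
    have "uchan U \<sigma> $$ (k,k') = (\<Sum>j<2^n. (\<Sum>i<2^n. U$$(k,i) * \<sigma>$$(i,j)) * cnj (U$$(k',j)))"
      using kk U sc unfolding uchan_def adj_def by (simp add: scalar_prod_def lessThan_atLeast0)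
    also have "\<dots> = 0"
    proof (intro sum.neutral ballI)
      fix j :: nat assume j: "j \<in> {..<2^n}"
      show "(\<Sum>i<2^n. U$$(k,i) * \<sigma>$$(i,j)) * cnj (U$$(k',j)) = 0"
      proof (cases "(?par k' \<noteq> ?par j) \<noteq> f")
        case True then show ?thesis using Up kk j by auto
      next
        case False
        have "(\<Sum>i<2^n. U$$(k,i) * \<sigma>$$(i,j)) = 0"
        proof (intro sum.neutral ballI)
          fix i :: nat assume i: "i \<in> {..<2^n}"
          show "U$$(k,i) * \<sigma>$$(i,j) = 0"
          proof (cases "(?par k \<noteq> ?par i) \<noteq> f")
            case True then show ?thesis using Up kk i by auto
          next
            case False2: False
            then have "?par i \<noteq> ?par j" using False kk(3) by auto
            then show ?thesis using s0 i j by auto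
          qed
        qed
        then show ?thesis by simp
      qed
    qed
    finally show ?thesis .
  qed
  moreover have "uchan U \<sigma> \<in> carrier_mat (2^n) (2^n)" using U sc adj_carrier[OF U] unfolding uchan_def
    by (meson mult_carrier_mat)
  ultimately show ?thesis unfolding dp_iff by blast
qed

lemma proj_conj: assumes K: "K \<in> carrier_mat N N" and v: "v \<in> carrier_vec N"
  shows "uchan K (proj v) = proj (K *\<^sub>v v)"
proof (rule eq_matI)
  fix i j assume ij: "i < dim_row (proj (K *\<^sub>v v))" "j < dim_col (proj (K *\<^sub>v v))"
  then have ij': "i < N" "j < N" using K unfolding proj_def by auto
  have "uchan K (proj v) $$ (i,j) = (\<Sum>s<N. (\<Sum>r<N. K$$(i,r) * (v$r * cnj (v$s))) * cnj (K$$(j,s)))"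
    using ij' K v unfolding uchan_def adj_def proj_def by (simp add: scalar_prod_def lessThan_atLeast0)
  also have "\<dots> = (\<Sum>r<N. K$$(i,r) * v$r) * cnj (\<Sum>s<N. K$$(j,s) * v$s)"
    by (simp add: sum_distrib_left sum_distrib_right cnj_sum algebra_simps)
  also have "\<dots> = proj (K *\<^sub>v v) $$ (i,j)"
    using ij' K v unfolding proj_def by (simp add: scalar_prod_def lessThan_atLeast0)
  finally show "uchan K (proj v) $$ (i,j) = proj (K *\<^sub>v v) $$ (i,j)" .
qed (use K v in \<open>auto simp: uchan_def proj_def\<close>)

lemma sum_split: fixes g :: "nat \<Rightarrow> 'a::comm_monoid_add" and Q P :: nat shows "(\<Sum>r<Q*P. g r) = (\<Sum>m<Q. \<Sum>l<P. g (m*P + l))"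
proof -
  have "sum g {m*P..<m*P+P} = (\<Sum>l<P. g (m*P + l))" for m
  proof -
    have h: "sum g {0 + m*P..<P + m*P} = (\<Sum>l=0..<P. g (l + m*P))" by (rule sum.shift_bounds_nat_ivl)
    have "{0 + m*P..<P + m*P} = {m*P..<m*P+P}" by (simp add: add.commute)
    moreover have "(\<Sum>l=0..<P. g (l + m*P)) = (\<Sum>l<P. g (m*P + l))"
      by (simp add: lessThan_atLeast0 add.commute)
    ultimately show ?thesis using h by simp
  qed
  then show ?thesis using sum.nat_group[of g P Q] by simp
qed

lemma sum_fl: assumes "0 < M" shows "(\<Sum>k<(2::nat)^M. g (fl k)) = (\<Sum>k<2^M. g k)"
  by (rule sum.reindex_bij_witness[where i=fl and j=fl]) (use fl_lt[OF assms] fl_fl in auto)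


lemma core:
  fixes L M :: nat and p q :: bool and v w :: "complex vec"
  assumes v: "v \<in> carrier_vec (2^L*2^M)" and w: "w \<in> carrier_vec (2^L*2^M)"
   and vp: "\<forall>r<2^L*2^M. basis_parity (L+M) r \<noteq> p \<longrightarrow> v$r = 0"
   and wq: "\<forall>r<2^L*2^M. basis_parity (L+M) r \<noteq> q \<longrightarrow> w$r = 0"
   and nz: "\<exists>r<2^L*2^M. v$r \<noteq> 0"
   and G: "\<forall>i<2^L. \<forall>j<2^L. (\<Sum>l<2^M. v$(i*2^M+l) * cnj (v$(j*2^M+l))) = (\<Sum>l<2^M. w$(i*2^M+l) * cnj (w$(j*2^M+l)))"
  shows "\<exists>U f. U \<in> carrier_mat (2^M) (2^M) \<and> U * adj U = 1\<^sub>m (2^M) \<and>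
     (\<forall>k<2^M. \<forall>l<2^M. (basis_parity M k \<noteq> basis_parity M l) \<noteq> f \<longrightarrow> U$$(k,l) = 0) \<and>
     (\<forall>i<2^L. U *\<^sub>v vec (2^M) (\<lambda>l. v$(i*2^M+l)) = vec (2^M) (\<lambda>l. w$(i*2^M+l)))"
proof -
  define P :: nat where "P = 2^M"
  define Q :: nat where "Q = 2^L"
  have idx: "i*P+l < Q*P" if "i < Q" "l < P" for i l
  proof -
    have "i*P+l < (i+1)*P" using that by simp
    also have "\<dots> \<le> Q*P" using that by (intro mult_le_mono1) simp
    finally show ?thesis .
  qed
  have ps: "basis_parity (L+M) (i*P+l) = (basis_parity L i \<noteq> basis_parity M l)" if "l < P" for i l
    using parity_split[of l M L i] that unfolding P_def by simp
  define a where "a i = vec P (\<lambda>l. v$(i*P+l))" for i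
  define b where "b i = vec P (\<lambda>l. w$(i*P+l))" for i
  have car: "\<forall>i<Q. a i \<in> carrier_vec P \<and> b i \<in> carrier_vec P" unfolding a_def b_def by simp
  have Gr: "\<forall>i<Q. \<forall>j<Q. ip (a i) (a j) = ip (b i) (b j)"
    using G unfolding a_def b_def ip_def P_def Q_def by simp
  have asup: "\<forall>i<Q. \<forall>l<P. basis_parity M l \<noteq> (basis_parity L i \<noteq> p) \<longrightarrow> a i $ l = 0"
  proof (intro allI impI)
    fix i l assume il: "i < Q" "l < P" "basis_parity M l \<noteq> (basis_parity L i \<noteq> p)"
    then have "basis_parity (L+M) (i*P+l) \<noteq> p" using ps by auto
    then show "a i $ l = 0" using vp idx il unfolding a_def P_def Q_def by auto
  qed
  have bsup: "\<forall>i<Q. \<forall>l<P. basis_parity M l \<noteq> (basis_parity L i \<noteq> q) \<longrightarrow> b i $ l = 0"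
  proof (intro allI impI)
    fix i l assume il: "i < Q" "l < P" "basis_parity M l \<noteq> (basis_parity L i \<noteq> q)"
    then have "basis_parity (L+M) (i*P+l) \<noteq> q" using ps by auto
    then show "b i $ l = 0" using wq idx il unfolding b_def P_def Q_def by auto
  qed
  have goal: "\<exists>U f. U \<in> carrier_mat P P \<and> U * adj U = 1\<^sub>m P \<and>
     (\<forall>k<P. \<forall>l<P. (basis_parity M k \<noteq> basis_parity M l) \<noteq> f \<longrightarrow> U$$(k,l) = 0) \<and>
     (\<forall>i<Q. U *\<^sub>v a i = b i)"
  proof (cases "p = q")
    case True
    have "\<exists>U. U \<in> carrier_mat P P \<and> U * adj U = 1\<^sub>m P \<and> ppres P (basis_parity M) U \<and> (\<forall>i<Q. U *\<^sub>v a i = b i)"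
      by (rule main_iter[where c="\<lambda>i. basis_parity L i \<noteq> p"]) (use car Gr asup bsup True in auto)
    then obtain U where U: "U \<in> carrier_mat P P" "U * adj U = 1\<^sub>m P" "ppres P (basis_parity M) U" "\<forall>i<Q. U *\<^sub>v a i = b i"
      by blast
    have "\<forall>k<P. \<forall>l<P. (basis_parity M k \<noteq> basis_parity M l) \<noteq> False \<longrightarrow> U$$(k,l) = 0"
      using U(3) unfolding ppres_def by simp
    then show ?thesis using U(1,2,4) by blast
  next
    case pq: False
    show ?thesis
    proof (cases "M = 0")
      case True
      then have P1: "P = 1" unfolding P_def by simp
      obtain r where r: "r < Q*P" "v$r \<noteq> 0" using nz unfolding P_def Q_def by blast
      then have rQ: "r < Q" using P1 by simp
      have "a r $ 0 \<noteq> 0" using r P1 unfolding a_def by simp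
      then have "ip (a r) (a r) \<noteq> 0" using ip_self_zero[of "a r" 0] P1 unfolding a_def by auto
      then have "ip (b r) (b r) \<noteq> 0" using Gr rQ by auto
      then have "b r $ 0 \<noteq> 0" using P1 unfolding ip_def b_def by auto
      then have w0: "w $ r \<noteq> 0" using P1 unfolding b_def by simp
      have "basis_parity (L+M) r = p" using vp r unfolding P_def Q_def by auto
      moreover have "basis_parity (L+M) r = q" using wq r w0 unfolding P_def Q_def by auto
      ultimately show ?thesis using pq by simp
    next
      case False
      then have M0: "0 < M" by simp
      have flP: "\<And>k. k < P \<Longrightarrow> fl k < P" using fl_lt[OF M0] unfolding P_def by blast
      have sfl: "\<And>g. (\<Sum>k<P. g (fl k)) = (\<Sum>k<P. g k)" using sum_fl[OF M0] unfolding P_def by blast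
      define a' where "a' i = vec P (\<lambda>k. a i $ fl k)" for i
      have car': "\<forall>i<Q. a' i \<in> carrier_vec P \<and> b i \<in> carrier_vec P" using car unfolding a'_def by simp
      have Gr': "\<forall>i<Q. \<forall>j<Q. ip (a' i) (a' j) = ip (b i) (b j)"
      proof (intro allI impI)
        fix i j assume ij: "i < Q" "j < Q"
        have "ip (a' i) (a' j) = (\<Sum>k<P. a i $ fl k * cnj (a j $ fl k))"
          unfolding a'_def ip_def by simp
        also have "\<dots> = (\<Sum>k<P. a i $ k * cnj (a j $ k))" by (rule sfl)
        also have "\<dots> = ip (a i) (a j)" unfolding ip_def a_def by simp
        finally show "ip (a' i) (a' j) = ip (b i) (b j)" using Gr ij by simp
      qed
      have asup': "\<forall>i<Q. \<forall>l<P. basis_parity M l \<noteq> (basis_parity L i \<noteq> q) \<longrightarrow> a' i $ l = 0"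
      proof (intro allI impI)
        fix i l assume il: "i < Q" "l < P" "basis_parity M l \<noteq> (basis_parity L i \<noteq> q)"
        then have "basis_parity M (fl l) \<noteq> (basis_parity L i \<noteq> p)" using fl_parity[OF M0] pq by auto
        then show "a' i $ l = 0" using asup il flP unfolding a'_def by auto
      qed
      have "\<exists>U. U \<in> carrier_mat P P \<and> U * adj U = 1\<^sub>m P \<and> ppres P (basis_parity M) U \<and> (\<forall>i<Q. U *\<^sub>v a' i = b i)"
        by (rule main_iter[where c="\<lambda>i. basis_parity L i \<noteq> q"]) (use car' Gr' asup' bsup in auto)
      then obtain U0 where U0: "U0 \<in> carrier_mat P P" "U0 * adj U0 = 1\<^sub>m P" "ppres P (basis_parity M) U0"
        "\<forall>i<Q. U0 *\<^sub>v a' i = b i" by blast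
      define U where "U = mat P P (\<lambda>(k,l). U0 $$ (k, fl l))"
      have Uc: "U \<in> carrier_mat P P" unfolding U_def by simp
      have Uu: "U * adj U = 1\<^sub>m P"
      proof (rule eq_matI)
        fix k k' assume kk: "k < dim_row (1\<^sub>m P)" "k' < dim_col (1\<^sub>m P)"
        have "(U * adj U) $$ (k,k') = (\<Sum>l<P. U0 $$ (k, fl l) * cnj (U0 $$ (k', fl l)))"
          using kk unfolding U_def adj_def by (simp add: scalar_prod_def lessThan_atLeast0)
        also have "\<dots> = (\<Sum>l<P. U0 $$ (k, l) * cnj (U0 $$ (k', l)))" by (rule sfl)
        also have "\<dots> = (U0 * adj U0) $$ (k,k')"
          using kk U0(1) unfolding adj_def by (simp add: scalar_prod_def lessThan_atLeast0)
        finally show "(U * adj U) $$ (k,k') = 1\<^sub>m P $$ (k,k')" using U0(2) by simp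
      qed (auto simp: U_def adj_def)
      have Up: "\<forall>k<P. \<forall>l<P. (basis_parity M k \<noteq> basis_parity M l) \<noteq> True \<longrightarrow> U$$(k,l) = 0"
      proof (intro allI impI)
        fix k l assume kl: "k < P" "l < P" "(basis_parity M k \<noteq> basis_parity M l) \<noteq> True"
        then have "basis_parity M k \<noteq> basis_parity M (fl l)" using fl_parity[OF M0, of l] by simp
        then have "U0 $$ (k, fl l) = 0" using U0(3) flP[OF kl(2)] kl(1) unfolding ppres_def by blast
        then show "U $$ (k,l) = 0" using kl unfolding U_def by simp
      qed
      have Ua: "\<forall>i<Q. U *\<^sub>v a i = b i"
      proof (intro allI impI)
        fix i assume i: "i < Q"
        have "U *\<^sub>v a i = U0 *\<^sub>v a' i"
        proof (rule eq_vecI)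
          fix k assume k: "k < dim_vec (U0 *\<^sub>v a' i)"
          then have k': "k < P" using U0(1) by simp
          have "(U *\<^sub>v a i) $ k = (\<Sum>l<P. U0 $$ (k, fl l) * a i $ l)"
            using k' unfolding U_def a_def by (simp add: scalar_prod_def lessThan_atLeast0)
          also have "\<dots> = (\<Sum>l<P. U0 $$ (k, fl (fl l)) * a i $ fl l)" by (rule sfl[symmetric])
          also have "\<dots> = (U0 *\<^sub>v a' i) $ k"
            using k' U0(1) unfolding a'_def by (simp add: scalar_prod_def lessThan_atLeast0 fl_fl)
          finally show "(U *\<^sub>v a i) $ k = (U0 *\<^sub>v a' i) $ k" .
        qed (use U0(1) in \<open>simp add: U_def\<close>)
        then show "U *\<^sub>v a i = b i" using U0(4) i by simp
      qed
      show ?thesis using Uc Uu Up Ua by blast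
    qed
  qed
  then show ?thesis unfolding P_def Q_def a_def b_def .
qed


lemma kron_apply:
  fixes P Q :: nat
  assumes P: "0 < P" and U: "U \<in> carrier_mat P P" and v: "v \<in> carrier_vec (Q*P)" and w: "w \<in> carrier_vec (Q*P)"
    and H: "\<forall>i<Q. U *\<^sub>v vec P (\<lambda>l. v$(i*P+l)) = vec P (\<lambda>l. w$(i*P+l))"
  shows "kron (1\<^sub>m Q) U *\<^sub>v v = w"
proof (rule eq_vecI)
  have Kd: "dim_row (kron (1\<^sub>m Q) U) = Q*P" "dim_col (kron (1\<^sub>m Q) U) = Q*P"
    using U unfolding kron_def by auto
  show "dim_vec (kron (1\<^sub>m Q) U *\<^sub>v v) = dim_vec w" using Kd w by simp
  fix r assume "r < dim_vec w"
  then have r: "r < Q*P" using w by simp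
  define i where "i = r div P"
  define k where "k = r mod P"
  have i: "i < Q" unfolding i_def using r by (simp add: less_mult_imp_div_less)
  have k: "k < P" unfolding k_def using P by simp
  have rik: "r = i*P + k" unfolding i_def k_def by simp
  have idx: "m*P+l < Q*P" if "m < Q" "l < P" for m l
  proof -
    have "m*P+l < (m+1)*P" using that by simp
    also have "\<dots> \<le> Q*P" using that by (intro mult_le_mono1) simp
    finally show ?thesis .
  qed
  have "(kron (1\<^sub>m Q) U *\<^sub>v v) $ r = (\<Sum>s<Q*P. kron (1\<^sub>m Q) U $$ (r,s) * v$s)"
    using r Kd v by (simp add: scalar_prod_def lessThan_atLeast0)
  also have "\<dots> = (\<Sum>m<Q. \<Sum>l<P. kron (1\<^sub>m Q) U $$ (r,m*P+l) * v$(m*P+l))"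
    by (rule sum_split)
  also have "\<dots> = (\<Sum>m<Q. (if i = m then 1 else 0) * (\<Sum>l<P. U $$ (k,l) * v$(m*P+l)))"
  proof (intro sum.cong refl)
    fix m assume m: "m \<in> {..<Q}"
    show "(\<Sum>l<P. kron (1\<^sub>m Q) U $$ (r,m*P+l) * v$(m*P+l)) = (if i = m then 1 else 0) * (\<Sum>l<P. U $$ (k,l) * v$(m*P+l))"
      unfolding sum_distrib_left
    proof (intro sum.cong refl)
      fix l assume l: "l \<in> {..<P}"
      have "(m*P+l) div P = m" "(m*P+l) mod P = l" using l P by auto
      then show "kron (1\<^sub>m Q) U $$ (r,m*P+l) * v$(m*P+l) = (if i = m then 1 else 0) * (U $$ (k,l) * v$(m*P+l))"
        using r idx[of m l] m l i U unfolding kron_def i_def[symmetric] k_def[symmetric] by (simp add: i_def k_def)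
    qed
  qed
  also have "\<dots> = (\<Sum>l<P. U $$ (k,l) * v$(i*P+l))" using i by (simp add: if_distrib[where f="\<lambda>z. z * _"] sum.delta cong: if_cong)
  also have "\<dots> = (U *\<^sub>v vec P (\<lambda>l. v$(i*P+l))) $ k"
    using k U by (simp add: scalar_prod_def lessThan_atLeast0)
  also have "\<dots> = w $ r" using H i k rik by simp
  finally show "(kron (1\<^sub>m Q) U *\<^sub>v v) $ r = w $ r" .
qed

lemma kron_carrier: "A \<in> carrier_mat a b \<Longrightarrow> B \<in> carrier_mat c d \<Longrightarrow> kron A B \<in> carrier_mat (a*c) (b*d)"
  unfolding kron_def by auto

theorem lemma2:
  fixes L M :: nat and \<rho> \<Psi> \<Phi> :: "complex mat"
  assumes "qstate L \<rho>"
    and "pure_state (L + M) \<Psi>" and "pure_state (L + M) \<Phi>"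
    and "ptrace_M L M \<Psi> = \<rho>" and "ptrace_M L M \<Phi> = \<rho>"
    and "definite_parity (L + M) \<Psi>" and "definite_parity (L + M) \<Phi>"
  shows "\<exists>U. unitary M U \<and>
           (\<forall>\<sigma>. qstate M \<sigma> \<and> definite_parity M \<sigma> \<longrightarrow> definite_parity M (uchan U \<sigma>)) \<and>
           uchan (kron (1\<^sub>m (2^L)) U) \<Psi> = \<Phi>"
proof -
  obtain v where v: "dim_vec v = 2^(L+M)" "vnorm2 v = 1" "\<Psi> = proj v" using assms(2) unfolding pure_state_def by blast
  obtain w where w: "dim_vec w = 2^(L+M)" "vnorm2 w = 1" "\<Phi> = proj w" using assms(3) unfolding pure_state_def by blast
  obtain p where p: "\<forall>i<2^(L+M). basis_parity (L+M) i \<noteq> p \<longrightarrow> v$i = 0" "\<exists>i<2^(L+M). v$i \<noteq> 0"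
    using pure_support[OF v(1,2)] assms(6) v(3) by blast
  obtain q where q: "\<forall>i<2^(L+M). basis_parity (L+M) i \<noteq> q \<longrightarrow> w$i = 0"
    using pure_support[OF w(1,2)] assms(7) w(3) by blast
  have N: "(2::nat)^(L+M) = 2^L*2^M" by (simp add: power_add)
  have idx: "m*2^M+l < (2::nat)^L*2^M" if "m < 2^L" "l < 2^M" for m l :: nat
  proof -
    have "m*2^M+l < (m+1)*2^M" using that by simp
    also have "\<dots> \<le> 2^L*2^M" using that by (intro mult_le_mono1) simp
    finally show ?thesis .
  qed
  have G: "\<forall>i<2^L. \<forall>j<2^L. (\<Sum>l<2^M. v$(i*2^M+l) * cnj (v$(j*2^M+l))) = (\<Sum>l<2^M. w$(i*2^M+l) * cnj (w$(j*2^M+l)))"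
  proof (intro allI impI)
    fix i j :: nat assume ij: "i < 2^L" "j < 2^L"
    have dv: "dim_vec v = 2^L*2^M" "dim_vec w = 2^L*2^M" using v(1) w(1) N by simp_all
    have "ptrace_M L M \<Psi> $$ (i,j) = (\<Sum>l<2^M. \<Psi> $$ (i*2^M+l, j*2^M+l))"
      using ij unfolding ptrace_M_def by simp
    also have "\<dots> = (\<Sum>l<2^M. v$(i*2^M+l) * cnj (v$(j*2^M+l)))"
    proof (rule sum.cong[OF refl])
      fix l assume "l \<in> {..<(2::nat)^M}"
      then have l: "l < 2^M" by simp
      have "i*2^M+l < dim_vec v" "j*2^M+l < dim_vec v" using idx[OF ij(1) l] idx[OF ij(2) l] dv by simp_all
      then show "\<Psi> $$ (i*2^M+l, j*2^M+l) = v$(i*2^M+l) * cnj (v$(j*2^M+l))"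
        unfolding v(3) proj_def by simp
    qed
    finally have e1: "ptrace_M L M \<Psi> $$ (i,j) = (\<Sum>l<2^M. v$(i*2^M+l) * cnj (v$(j*2^M+l)))" .
    have "ptrace_M L M \<Phi> $$ (i,j) = (\<Sum>l<2^M. \<Phi> $$ (i*2^M+l, j*2^M+l))"
      using ij unfolding ptrace_M_def by simp
    also have "\<dots> = (\<Sum>l<2^M. w$(i*2^M+l) * cnj (w$(j*2^M+l)))"
    proof (rule sum.cong[OF refl])
      fix l assume "l \<in> {..<(2::nat)^M}"
      then have l: "l < 2^M" by simp
      have "i*2^M+l < dim_vec w" "j*2^M+l < dim_vec w" using idx[OF ij(1) l] idx[OF ij(2) l] dv by simp_all
      then show "\<Phi> $$ (i*2^M+l, j*2^M+l) = w$(i*2^M+l) * cnj (w$(j*2^M+l))"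
        unfolding w(3) proj_def by simp
    qed
    finally have e2: "ptrace_M L M \<Phi> $$ (i,j) = (\<Sum>l<2^M. w$(i*2^M+l) * cnj (w$(j*2^M+l)))" .
    from e1 e2 show "(\<Sum>l<2^M. v$(i*2^M+l) * cnj (v$(j*2^M+l))) = (\<Sum>l<2^M. w$(i*2^M+l) * cnj (w$(j*2^M+l)))"
      using assms(4,5) by metis
  qed
  have vc: "v \<in> carrier_vec (2^L*2^M)" and wc: "w \<in> carrier_vec (2^L*2^M)" by (rule carrier_vecI[OF v(1)[unfolded N]], rule carrier_vecI[OF w(1)[unfolded N]])
  obtain U f where U: "U \<in> carrier_mat (2^M) (2^M)" "U * adj U = 1\<^sub>m (2^M)"
     "\<forall>k<2^M. \<forall>l<2^M. (basis_parity M k \<noteq> basis_parity M l) \<noteq> f \<longrightarrow> U$$(k,l) = 0"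
     "\<forall>i<2^L. U *\<^sub>v vec (2^M) (\<lambda>l. v$(i*2^M+l)) = vec (2^M) (\<lambda>l. w$(i*2^M+l))"
    using core[OF vc wc p(1)[unfolded N] q[unfolded N] p(2)[unfolded N] G] by blast
  have K: "kron (1\<^sub>m (2^L)) U \<in> carrier_mat (2^L*2^M) (2^L*2^M)" by (rule kron_carrier[OF one_carrier_mat U(1)])
  have Kv: "kron (1\<^sub>m (2^L)) U *\<^sub>v v = w"
    by (rule kron_apply[OF _ U(1) vc wc U(4)]) simp
  show ?thesis
  proof (intro exI[of _ U] conjI allI impI)
    show "unitary M U" unfolding unitary_def using U by simp
    fix \<sigma> assume "qstate M \<sigma> \<and> definite_parity M \<sigma>"
    then show "definite_parity M (uchan U \<sigma>)" using dp_preserve[OF U(1) U(3)] by blast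
  next
    show "uchan (kron (1\<^sub>m (2^L)) U) \<Psi> = \<Phi>" using proj_conj[OF K vc] Kv v(3) w(3) by simp
  qed
qed

end
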